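(* Let $p$ be a prime, $n\ge1$, and let $C=\langle a\rangle$ be a cyclic group of order $p^n$. Let $H$ be a finite group acting on $C$ by group automorphisms, and let $Ha$ denote the $H$-orbit of the generator $a$. Then $m_{\mathsf{faithful}}(C\rtimes H)\ge |Ha|$. Moreover, equality holds if $H$ acts faithfully on $C$.
   Context: For a finite group $G$, $m_{\mathsf{faithful}}(G)$ denotes the smallest dimension of a faithful complex representation of $G$. *)

theory Defs
  imports "HOL-Algebra.Algebra" "Jordan_Normal_Form.Matrix"
begin

text \<open>A d-dimensional complex representation of a group G: a homomorphism
  into GL_d(C), i.e. a map into d x d complex matrices that is multiplicative
  and sends the identity to the identity matrix (hence lands in invertible matrices).\<close>
definition complex_rep :: "('g, 'b) monoid_scheme \<Rightarrow> nat \<Rightarrow> ('g \<Rightarrow> complex mat) \<Rightarrow> bool" where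
  "complex_rep G d \<rho> \<longleftrightarrow>
     (\<forall>g \<in> carrier G. \<rho> g \<in> carrier_mat d d) \<and>
     \<rho> \<one>\<^bsub>G\<^esub> = 1\<^sub>m d \<and>
     (\<forall>g \<in> carrier G. \<forall>h \<in> carrier G. \<rho> (g \<otimes>\<^bsub>G\<^esub> h) = \<rho> g * \<rho> h)"

definition faithful_complex_rep :: "('g, 'b) monoid_scheme \<Rightarrow> nat \<Rightarrow> ('g \<Rightarrow> complex mat) \<Rightarrow> bool" where
  "faithful_complex_rep G d \<rho> \<longleftrightarrow> complex_rep G d \<rho> \<and> inj_on \<rho> (carrier G)"

definition m_faithful :: "('g, 'b) monoid_scheme \<Rightarrow> nat" where
  "m_faithful G = (LEAST d. \<exists>\<rho>. faithful_complex_rep G d \<rho>)"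

definition semidirect_prod ::
  "('c, 'x) monoid_scheme \<Rightarrow> ('h, 'y) monoid_scheme \<Rightarrow> ('h \<Rightarrow> 'c \<Rightarrow> 'c) \<Rightarrow> ('c \<times> 'h) monoid" where
  "semidirect_prod C H \<phi> =
     \<lparr> carrier = carrier C \<times> carrier H,
       monoid.mult = (\<lambda>(c1, h1) (c2, h2). (c1 \<otimes>\<^bsub>C\<^esub> \<phi> h1 c2, h1 \<otimes>\<^bsub>H\<^esub> h2)),
       monoid.one = (\<one>\<^bsub>C\<^esub>, \<one>\<^bsub>H\<^esub>) \<rparr>"

end

theory Submission
  imports Defs "Jordan_Normal_Form.Schur_Decomposition" "Jordan_Normal_Form.Spectral_Radius"
    "HOL-Computational_Algebra.Primes"
begin

hide_const (open) Polynomial.order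

lemma ut_mult_index:
  assumes A: "A \<in> carrier_mat n n" and B: "B \<in> carrier_mat n n"
    and uA: "upper_triangular A" and uB: "upper_triangular B" and ji: "j \<le> i" and i: "i < n"
  shows "(A * B) $$ (i,j) = A $$ (i,i) * B $$ (i,j)"
proof -
  have j: "j < n" using ji i by simp
  have "(A * B) $$ (i,j) = (\<Sum>k\<in>{0..<n}. A $$ (i,k) * B $$ (k,j))"
    using A B i j by (simp add: scalar_prod_def)
  also have "\<dots> = (\<Sum>k\<in>{0..<n}. if k = i then A $$ (i,i) * B $$ (i,j) else 0)"
  proof (rule sum.cong[OF refl])
    fix k assume k: "k \<in> {0..<n}"
    show "A $$ (i,k) * B $$ (k,j) = (if k = i then A $$ (i,i) * B $$ (i,j) else 0)"
    proof (cases "k < i")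
      case True
      have "A $$ (i,k) = 0" using uA True i A by (auto intro: upper_triangularD)
      then show ?thesis using True by simp
    next
      case False
      show ?thesis
      proof (cases "k = i")
        case False
        with \<open>\<not> k < i\<close> have "j < k" using ji by simp
        have "B $$ (k,j) = 0" using upper_triangularD[OF uB \<open>j < k\<close>] B k by auto
        then show ?thesis using False by simp
      qed simp
    qed
  qed
  also have "\<dots> = A $$ (i,i) * B $$ (i,j)" using i by simp
  finally show ?thesis .
qed

lemma ut_pow:
  assumes A: "A \<in> carrier_mat n n" and uA: "upper_triangular A"
  shows "upper_triangular (A ^\<^sub>m k) \<and> (\<forall>i<n. (A ^\<^sub>m k) $$ (i,i) = A $$ (i,i) ^ k)"
proof (induct k)
  case 0
  then show ?case using A by auto
next
  case (Suc k)
  have X: "A ^\<^sub>m k \<in> carrier_mat n n" using A by simp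
  have u: "upper_triangular (A ^\<^sub>m k)" using Suc by simp
  have "upper_triangular (A ^\<^sub>m k * A)"
  proof
    fix i j assume "j < i" "i < dim_row (A ^\<^sub>m k * A)"
    then show "(A ^\<^sub>m k * A) $$ (i,j) = 0"
      using ut_mult_index[OF X A u uA, of j i] upper_triangularD[OF uA, of j i] A by auto
  qed
  moreover have "\<forall>i<n. (A ^\<^sub>m k * A) $$ (i,i) = A $$ (i,i) ^ Suc k"
    using ut_mult_index[OF X A u uA] Suc by (auto simp: power_Suc2 simp del: power_Suc)
  ultimately show ?case by simp
qed

fun msum :: "complex mat \<Rightarrow> nat \<Rightarrow> nat \<Rightarrow> complex mat" where
  "msum M nn 0 = 0\<^sub>m nn nn"
| "msum M nn (Suc k) = msum M nn k + M ^\<^sub>m k"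

lemma msum_carrier: "M \<in> carrier_mat d d \<Longrightarrow> msum M d l \<in> carrier_mat d d"
  by (induct l) auto


lemma msum_index: assumes MC: "M \<in> carrier_mat d d" and i: "i < d" and j: "j < d"
  shows "msum M d l $$ (i,j) = (\<Sum>k<l. (M ^\<^sub>m k) $$ (i,j))"
proof (induct l)
  case 0
  then show ?case using i j by simp
next
  case (Suc l)
  have MS: "msum M d l \<in> carrier_mat d d" using msum_carrier[OF MC] .
  have PM: "M ^\<^sub>m l \<in> carrier_mat d d" using MC by simp
  have "msum M d (Suc l) $$ (i,j) = msum M d l $$ (i,j) + (M ^\<^sub>m l) $$ (i,j)"
  proof -
    have "dim_row (M ^\<^sub>m l) = d" "dim_col (M ^\<^sub>m l) = d" using PM by auto
    then show ?thesis using i j by simp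
  qed
  then show ?case using Suc by simp
qed

lemma msum_sim:
  assumes sim: "similar_mat_wit B U P Q" and U: "U \<in> carrier_mat d d"
  shows "msum B d l = P * msum U d l * Q"
proof -
  note W = similar_mat_witD[OF refl sim]
  have dB: "dim_row B = d" using W(5) U unfolding carrier_mat_def by simp
  have carr: "B \<in> carrier_mat d d" "P \<in> carrier_mat d d" "Q \<in> carrier_mat d d"
    using W(4,6,7) unfolding dB by auto
  show ?thesis
  proof (induct l)
    case 0
    have "P * 0\<^sub>m d d = 0\<^sub>m d d" using carr(2) by (rule right_mult_zero_mat)
    moreover have "0\<^sub>m d d * Q = 0\<^sub>m d d" using carr(3) by (rule left_mult_zero_mat)
    ultimately have "P * 0\<^sub>m d d * Q = 0\<^sub>m d d" by simp
    then show ?case unfolding msum.simps by simp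
  next
    case (Suc l)
    have MU: "msum U d l \<in> carrier_mat d d" using msum_carrier[OF U] .
    have PU: "U ^\<^sub>m l \<in> carrier_mat d d" using U by (rule pow_carrier_mat)
    have A1: "P * msum U d l \<in> carrier_mat d d" using carr(2) MU by (rule mult_carrier_mat)
    have A2: "P * U ^\<^sub>m l \<in> carrier_mat d d" using carr(2) PU by (rule mult_carrier_mat)
    have pw: "B ^\<^sub>m l = P * U ^\<^sub>m l * Q" by (rule similar_mat_wit_pow_id[OF sim])
    have "msum B d (Suc l) = msum B d l + B ^\<^sub>m l" by simp
    also have "\<dots> = P * msum U d l * Q + P * U ^\<^sub>m l * Q" unfolding Suc pw ..
    also have "\<dots> = (P * msum U d l + P * U ^\<^sub>m l) * Q"
      by (rule add_mult_distrib_mat[OF A1 A2 carr(3), symmetric])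
    also have "P * msum U d l + P * U ^\<^sub>m l = P * (msum U d l + U ^\<^sub>m l)"
      by (rule mult_add_distrib_mat[OF carr(2) MU PU, symmetric])
    also have "msum U d l + U ^\<^sub>m l = msum U d (Suc l)" by simp
    finally show ?case .
  qed
qed

lemma msum_tele:
  assumes MC: "M \<in> carrier_mat d d"
  shows "msum M d l * M + 1\<^sub>m d = msum M d l + M ^\<^sub>m l"
proof (induct l)
  case 0
  then show ?case using MC by simp
next
  case (Suc l)
  have MS: "msum M d l \<in> carrier_mat d d" using msum_carrier[OF MC] .
  have P: "M ^\<^sub>m l \<in> carrier_mat d d" using MC by simp
  have "msum M d (Suc l) * M + 1\<^sub>m d = (msum M d l * M + M ^\<^sub>m Suc l) + 1\<^sub>m d"
    using add_mult_distrib_mat[OF MS P MC] by simp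
  also have "\<dots> = (msum M d l * M + 1\<^sub>m d) + M ^\<^sub>m Suc l"
  proof -
    have R: "M ^\<^sub>m Suc l \<in> carrier_mat d d" using pow_carrier_mat[OF MC] .
    have L: "msum M d l * M \<in> carrier_mat d d" using MS MC by simp
    show ?thesis
    proof (rule eq_matI)
      fix i j assume "i < dim_row ((msum M d l * M + 1\<^sub>m d) + M ^\<^sub>m Suc l)"
        "j < dim_col ((msum M d l * M + 1\<^sub>m d) + M ^\<^sub>m Suc l)"
      then have ij: "i < d" "j < d" using R L by auto
      have dR: "dim_row (M ^\<^sub>m Suc l) = d" "dim_col (M ^\<^sub>m Suc l) = d" using R by auto
      have e1: "(msum M d l * M + M ^\<^sub>m Suc l + 1\<^sub>m d) $$ (i,j) =
          (msum M d l * M) $$ (i,j) + (M ^\<^sub>m Suc l) $$ (i,j) + 1\<^sub>m d $$ (i,j)"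
        using ij dR by simp
      have e2: "(msum M d l * M + 1\<^sub>m d + M ^\<^sub>m Suc l) $$ (i,j) =
          (msum M d l * M) $$ (i,j) + 1\<^sub>m d $$ (i,j) + (M ^\<^sub>m Suc l) $$ (i,j)"
        using ij dR by simp
      show "(msum M d l * M + M ^\<^sub>m Suc l + 1\<^sub>m d) $$ (i,j) =
          (msum M d l * M + 1\<^sub>m d + M ^\<^sub>m Suc l) $$ (i,j)" unfolding e1 e2 by simp
    qed (use R L in auto)
  qed
  also have "\<dots> = msum M d (Suc l) + M ^\<^sub>m Suc l" using Suc by simp
  finally show ?case .
qed


lemma msum_ut:
  assumes U: "U \<in> carrier_mat d d" and uU: "upper_triangular U"
  shows "upper_triangular (msum U d l) \<and> (\<forall>i<d. msum U d l $$ (i,i) = (\<Sum>k<l. U $$ (i,i) ^ k))"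
proof -
  have "upper_triangular (msum U d l)"
  proof
    fix i j assume "j < i" "i < dim_row (msum U d l)"
    then show "msum U d l $$ (i,j) = 0"
    proof -
      have "\<And>x. (U ^\<^sub>m x) $$ (i,j) = 0"
      proof -
        fix x
        have "U ^\<^sub>m x \<in> carrier_mat d d" using U by simp
        then show "(U ^\<^sub>m x) $$ (i,j) = 0"
          using upper_triangularD[of "U ^\<^sub>m x" j i] ut_pow[OF U uU, of x] \<open>j < i\<close> \<open>i < dim_row (msum U d l)\<close>
            msum_carrier[OF U, of l] by auto
      qed
      then show ?thesis using msum_index[OF U, of i j l] msum_carrier[OF U, of l] \<open>j < i\<close> \<open>i < dim_row (msum U d l)\<close>
        by auto
    qed
  qed
  moreover have "\<forall>i<d. msum U d l $$ (i,i) = (\<Sum>k<l. U $$ (i,i) ^ k)"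
    using msum_index[OF U] ut_pow[OF U uU] by auto
  ultimately show ?thesis by blast
qed

lemma prim_eig:
  fixes A :: "complex mat"
  assumes A: "A \<in> carrier_mat d d" and B1: "A ^\<^sub>m m \<noteq> 1\<^sub>m d"
    and Bq: "(A ^\<^sub>m m) ^\<^sub>m q = 1\<^sub>m d"
  shows "\<exists>lam. eigenvalue A lam \<and> (\<Sum>l<q. (lam ^ m) ^ l) = 0"
proof -
  define B where "B = A ^\<^sub>m m"
  have B: "B \<in> carrier_mat d d" using A unfolding B_def by simp
  define S where "S = msum B d q"
  have S: "S \<in> carrier_mat d d" unfolding S_def using msum_carrier[OF B] .
  have SB: "S * B = S"
  proof -
    have "S * B + 1\<^sub>m d = S + 1\<^sub>m d" using msum_tele[OF B, of q] Bq unfolding S_def B_def by simp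
    then have "\<forall>i<d. \<forall>j<d. (S * B) $$ (i,j) = S $$ (i,j)"
    proof (intro allI impI)
      fix i j assume ij: "i < d" "j < d"
      assume eq: "S * B + 1\<^sub>m d = S + 1\<^sub>m d"
      have "(S * B + 1\<^sub>m d) $$ (i,j) = (S + 1\<^sub>m d) $$ (i,j)" using eq by simp
      then show "(S * B) $$ (i,j) = S $$ (i,j)" using S B ij by simp
    qed
    then show ?thesis by (intro eq_matI) (use S B in auto)
  qed
  have "\<exists>i j. i < d \<and> j < d \<and> B $$ (i,j) \<noteq> 1\<^sub>m d $$ (i,j)"
  proof (rule ccontr)
    assume "\<not> (\<exists>i j. i < d \<and> j < d \<and> B $$ (i,j) \<noteq> 1\<^sub>m d $$ (i,j))"
    then have "B = 1\<^sub>m d" using B by (intro eq_matI) auto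
    with B1 show False unfolding B_def by simp
  qed
  then obtain i j where ij: "i < d" "j < d" "B $$ (i,j) \<noteq> 1\<^sub>m d $$ (i,j)" by blast
  define e :: "complex vec" where "e = unit_vec d j"
  have e: "e \<in> carrier_vec d" unfolding e_def by simp
  define w where "w = B *\<^sub>v e - e"
  have w: "w \<in> carrier_vec d" unfolding w_def using B e by simp
  have "w $ i \<noteq> 0"
  proof -
    have "(B *\<^sub>v e) $ i = B $$ (i,j)" unfolding e_def using B ij by simp
    moreover have "e $ i = 1\<^sub>m d $$ (i,j)" unfolding e_def using ij by simp
    ultimately show ?thesis unfolding w_def using ij B e ij(3) by simp
  qed
  then have w0: "w \<noteq> 0\<^sub>v d" using ij by auto
  have "S *\<^sub>v w = S *\<^sub>v (B *\<^sub>v e) - S *\<^sub>v e"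
    unfolding w_def using S B e by (simp add: mult_minus_distrib_mat_vec)
  also have "S *\<^sub>v (B *\<^sub>v e) = S *\<^sub>v e"
    using assoc_mult_mat_vec[OF S B e] SB by simp
  finally have "S *\<^sub>v w = 0\<^sub>v d" using S e by simp
  then have detS: "det S = 0" using det_0_iff_vec_prod_zero[OF S] w w0 by blast
  obtain es where es: "char_poly A = (\<Prod>a\<leftarrow>es. [:- a, 1:])" "length es = d"
    using char_poly_factorized[OF A] by blast
  obtain T P Q where sch: "schur_decomposition A es = (T,P,Q)" by (cases "schur_decomposition A es") auto
  from schur_decomposition[OF A es(1) sch] have
    sim: "similar_mat_wit A T P Q" and uT: "upper_triangular T" and dT: "diag_mat T = es" by auto
  have T: "T \<in> carrier_mat d d" using similar_mat_witD2[OF A sim] by auto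
  define U where "U = T ^\<^sub>m m"
  have U: "U \<in> carrier_mat d d" unfolding U_def using T by simp
  have uU: "upper_triangular U" and dU: "\<forall>i<d. U $$ (i,i) = T $$ (i,i) ^ m"
    using ut_pow[OF T uT, of m] unfolding U_def by auto
  have simB: "similar_mat_wit B U P Q" unfolding B_def U_def by (rule similar_mat_wit_pow[OF sim])
  have simS: "similar_mat_wit S (msum U d q) P Q"
  proof -
    note W = similar_mat_witD2[OF B simB]
    have PQ: "P \<in> carrier_mat d d" "Q \<in> carrier_mat d d" "P * Q = 1\<^sub>m d" "Q * P = 1\<^sub>m d"
      using W by auto
    show ?thesis
      by (rule similar_mat_witI[OF PQ(3,4) _ S msum_carrier[OF U] PQ(1,2)])
        (simp add: S_def msum_sim[OF simB U])
  qed
  have "det (msum U d q) = 0" using detS det_similar[of S "msum U d q"] simS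
    unfolding similar_mat_def by auto
  moreover have "det (msum U d q) = prod_list (diag_mat (msum U d q))"
    using det_upper_triangular[of "msum U d q" d] msum_ut[OF U uU] msum_carrier[OF U] by auto
  ultimately have "0 \<in> set (diag_mat (msum U d q))" by (simp add: prod_list_zero_iff)
  then obtain k where k: "k < d" "msum U d q $$ (k,k) = 0"
    unfolding diag_mat_def using msum_carrier[OF U, of q] by auto
  have tk: "T $$ (k,k) = es ! k" using dT[symmetric] k T unfolding diag_mat_def by auto
  have sum0: "(\<Sum>l<q. (T $$ (k,k) ^ m) ^ l) = 0" using k msum_ut[OF U uU] dU by auto
  have "poly (char_poly A) (T $$ (k,k)) = 0"
    unfolding es(1) poly_prod_list tk using k es(2)
    by (auto simp: prod_list_zero_iff)
  then have "eigenvalue A (T $$ (k,k))" using eigenvalue_root_char_poly[OF A] by simp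
  with sum0 show ?thesis by blast
qed


lemma prim_root:
  fixes lam :: complex and p n :: nat
  assumes p: "Factorial_Ring.prime p" and n: "n \<ge> 1" and s: "(\<Sum>l<p. (lam ^ (p ^ (n - 1))) ^ l) = 0"
  shows "lam ^ (p ^ n) = 1" "\<And>j. lam ^ j = 1 \<Longrightarrow> p ^ n dvd j"
proof -
  define x where "x = lam ^ (p ^ (n - 1))"
  have pn: "p ^ n = p ^ (n - 1) * p" using n by (metis Suc_diff_le diff_Suc_1 power_Suc2)
  have x1: "x \<noteq> 1"
  proof
    assume "x = 1"
    then have "(\<Sum>l<p. (lam ^ (p ^ (n - 1))) ^ l) = of_nat p" unfolding x_def[symmetric] by simp
    with s p show False by (simp add: prime_gt_0_nat)
  qed
  have "x ^ p - 1 = 0" using power_diff_1_eq[of x p] s unfolding x_def by simp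
  then have xp: "x ^ p = 1" by simp
  show lp: "lam ^ (p ^ n) = 1" using xp unfolding x_def pn by (simp add: power_mult)
  have lam0: "lam \<noteq> 0" using lp p by (metis power_0_left prime_gt_0_nat power_eq_0_iff zero_neq_one)
  fix j assume lj: "lam ^ j = 1"
  show "p ^ n dvd j"
  proof (cases "j = 0")
    case False
    obtain u v where uv: "j * u = p ^ n * v + gcd j (p ^ n)" using bezout_nat[OF False] by blast
    have "lam ^ (j * u) = 1" using lj by (simp add: power_mult)
    moreover have "lam ^ (p ^ n * v) = 1" using lp by (simp add: power_mult)
    ultimately have lg: "lam ^ gcd j (p ^ n) = 1" unfolding uv power_add by simp
    obtain i where i: "i \<le> n" "gcd j (p ^ n) = p ^ i"
      using divides_primepow_nat[OF p] by (meson gcd_dvd2)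
    show ?thesis
    proof (cases "i = n")
      case True then show ?thesis using i by (metis gcd_dvd1)
    next
      case False
      then have "p ^ i dvd p ^ (n - 1)" using i by (simp add: le_imp_power_dvd)
      then obtain t where "p ^ (n - 1) = p ^ i * t" by blast
      then have "x = 1" unfolding x_def using lg i by (simp add: power_mult)
      with x1 show ?thesis by simp
    qed
  qed simp
qed

lemma cis_root:
  assumes N: "N > 0"
  shows "\<exists>z::complex. z \<noteq> 0 \<and> (\<forall>j. z ^ j = 1 \<longleftrightarrow> N dvd j)"
proof (intro exI conjI allI)
  let ?z = "cis (2 * pi / real N)"
  show "?z \<noteq> 0" by (metis cis_neq_zero)
  fix j
  show "?z ^ j = 1 \<longleftrightarrow> N dvd j"
  proof
    assume "?z ^ j = 1"
    then have "cis (real j * (2 * pi / real N)) = 1" by (simp add: DeMoivre)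
    then have "Re (cis (real j * (2 * pi / real N))) = 1" by simp
    then have "cos (real j * (2 * pi / real N)) = 1" by simp
    then obtain t :: int where t: "real j * (2 * pi / real N) = real_of_int t * 2 * pi"
      using cos_one_2pi_int by blast
    then have "real j = real_of_int t * real N" using N by (simp add: field_simps)
    then have "int j = t * int N" by (metis of_int_eq_iff of_int_mult of_int_of_nat_eq)
    then have "int N dvd int j" by simp
    then show "N dvd j" by simp
  next
    assume "N dvd j"
    then obtain t where "j = N * t" by blast
    then have "real j * (2 * pi / real N) = 2 * pi * real t" using N by (simp add: field_simps)
    then show "?z ^ j = 1" by (simp add: DeMoivre)
  qed
qed


definition mono_mat :: "nat \<Rightarrow> (nat \<Rightarrow> 'z) \<Rightarrow> ('z \<Rightarrow> 'z) \<Rightarrow> ('z \<Rightarrow> complex) \<Rightarrow> complex mat" where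
  "mono_mat N f s c = mat N N (\<lambda>(i,j). if f i = s (f j) then c (f j) else 0)"

lemma mono_mat_carrier[simp]: "mono_mat N f s c \<in> carrier_mat N N"
  unfolding mono_mat_def by simp

lemma mono_mat_mult:
  assumes bij: "bij_betw f {0..<N} Z" and s2: "\<forall>z\<in>Z. s2 z \<in> Z"
  shows "mono_mat N f s1 c1 * mono_mat N f s2 c2 =
         mono_mat N f (\<lambda>z. s1 (s2 z)) (\<lambda>z. c1 (s2 z) * c2 z)"
proof (rule eq_matI)
  fix i j assume i: "i < dim_row (mono_mat N f (\<lambda>z. s1 (s2 z)) (\<lambda>z. c1 (s2 z) * c2 z))"
    and j: "j < dim_col (mono_mat N f (\<lambda>z. s1 (s2 z)) (\<lambda>z. c1 (s2 z) * c2 z))"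
  then have i: "i < N" and j: "j < N" by (auto simp: mono_mat_def)
  have fj: "f j \<in> Z" using bij j by (auto simp: bij_betw_def)
  then have "s2 (f j) \<in> Z" using s2 by auto
  then obtain k0 where k0: "k0 < N" "f k0 = s2 (f j)" using bij
    by (metis atLeastLessThan_iff bij_betw_iff_bijections)
  have eqk: "\<And>k. k < N \<Longrightarrow> f k = s2 (f j) \<longleftrightarrow> k = k0"
    using bij k0 unfolding bij_betw_def inj_on_def by auto
  have "(mono_mat N f s1 c1 * mono_mat N f s2 c2) $$ (i,j) =
     (\<Sum>k\<in>{0..<N}. (if f i = s1 (f k) then c1 (f k) else 0) * (if f k = s2 (f j) then c2 (f j) else 0))"
    using i j by (simp add: mono_mat_def scalar_prod_def)
  also have "\<dots> = (\<Sum>k\<in>{0..<N}. if k = k0 then (if f i = s1 (f k0) then c1 (f k0) else 0) * c2 (f j) else 0)"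
    by (rule sum.cong[OF refl]) (auto simp: eqk)
  also have "\<dots> = (if f i = s1 (f k0) then c1 (f k0) else 0) * c2 (f j)" using k0 by simp
  also have "\<dots> = mono_mat N f (\<lambda>z. s1 (s2 z)) (\<lambda>z. c1 (s2 z) * c2 z) $$ (i,j)"
    using i j k0 by (simp add: mono_mat_def)
  finally show "(mono_mat N f s1 c1 * mono_mat N f s2 c2) $$ (i,j) =
     mono_mat N f (\<lambda>z. s1 (s2 z)) (\<lambda>z. c1 (s2 z) * c2 z) $$ (i,j)" .
qed (auto simp: mono_mat_def)

lemma mono_mat_one:
  assumes bij: "bij_betw f {0..<N} Z" and s: "\<forall>z\<in>Z. s z = z" and c: "\<forall>z\<in>Z. c z = 1"
  shows "mono_mat N f s c = 1\<^sub>m N"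
proof (rule eq_matI)
  fix i j assume "i < dim_row (1\<^sub>m N)" "j < dim_col (1\<^sub>m N)"
  then have i: "i < N" and j: "j < N" by auto
  have fj: "f j \<in> Z" using bij j by (auto simp: bij_betw_def)
  have "f i = f j \<longleftrightarrow> i = j" using bij i j unfolding bij_betw_def inj_on_def by auto
  then show "mono_mat N f s c $$ (i,j) = 1\<^sub>m N $$ (i,j)"
    using i j fj s c by (simp add: mono_mat_def)
qed (auto simp: mono_mat_def)

lemma mono_mat_eqD:
  assumes bij: "bij_betw f {0..<N} Z" and z: "z \<in> Z" and sz: "s z \<in> Z"
    and cz: "c z \<noteq> 0" and eq: "mono_mat N f s c = mono_mat N f s' c'"
  shows "s z = s' z \<and> c z = c' z"
proof -
  obtain j where j: "j < N" "f j = z" using bij z by (metis atLeastLessThan_iff bij_betw_iff_bijections)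
  obtain i where i: "i < N" "f i = s z" using bij sz by (metis atLeastLessThan_iff bij_betw_iff_bijections)
  have "mono_mat N f s c $$ (i,j) = c z" using i j by (simp add: mono_mat_def)
  moreover have "mono_mat N f s' c' $$ (i,j) = (if s z = s' z then c' z else 0)"
    using i j by (simp add: mono_mat_def)
  ultimately show ?thesis using eq cz by (metis)
qed

lemma mono_rep:
  assumes bij: "bij_betw f {0..<N} Z"
    and scl: "\<And>g z. g \<in> carrier G \<Longrightarrow> z \<in> Z \<Longrightarrow> s g z \<in> Z"
    and smul: "\<And>g h z. g \<in> carrier G \<Longrightarrow> h \<in> carrier G \<Longrightarrow> z \<in> Z \<Longrightarrow>
        s (g \<otimes>\<^bsub>G\<^esub> h) z = s g (s h z) \<and> c (g \<otimes>\<^bsub>G\<^esub> h) z = c g (s h z) * c h z"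
    and sone: "\<And>z. z \<in> Z \<Longrightarrow> s \<one>\<^bsub>G\<^esub> z = z \<and> c \<one>\<^bsub>G\<^esub> z = 1"
  shows "complex_rep G N (\<lambda>g. mono_mat N f (s g) (c g))"
  unfolding complex_rep_def
proof (intro conjI ballI)
  show "mono_mat N f (s \<one>\<^bsub>G\<^esub>) (c \<one>\<^bsub>G\<^esub>) = 1\<^sub>m N"
    by (rule mono_mat_one[OF bij]) (use sone in auto)
next
  fix g h assume g: "g \<in> carrier G" and h: "h \<in> carrier G"
  have "mono_mat N f (s g) (c g) * mono_mat N f (s h) (c h) =
        mono_mat N f (\<lambda>z. s g (s h z)) (\<lambda>z. c g (s h z) * c h z)"
    by (rule mono_mat_mult[OF bij]) (use scl h in auto)
  also have "\<dots> = mono_mat N f (s (g \<otimes>\<^bsub>G\<^esub> h)) (c (g \<otimes>\<^bsub>G\<^esub> h))"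
  proof -
    have "\<And>j. j < N \<Longrightarrow> f j \<in> Z" using bij by (auto simp: bij_betw_def)
    then show ?thesis unfolding mono_mat_def using smul[OF g h]
      by (intro eq_matI) auto
  qed
  finally show "mono_mat N f (s (g \<otimes>\<^bsub>G\<^esub> h)) (c (g \<otimes>\<^bsub>G\<^esub> h)) =
      mono_mat N f (s g) (c g) * mono_mat N f (s h) (c h)" by simp
qed simp

lemma regular_rep:
  assumes M: "monoid G" and fin: "finite (carrier G)"
  shows "\<exists>d \<rho>. faithful_complex_rep G d \<rho>"
proof -
  interpret monoid G by (rule M)
  obtain f where bij: "bij_betw f {0..<card (carrier G)} (carrier G)"
    using ex_bij_betw_nat_finite[OF fin] by blast
  define s where "s = (\<lambda>g z. g \<otimes>\<^bsub>G\<^esub> z)"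
  define c where "c = (\<lambda>(g::'a) (z::'a). (1::complex))"
  have rep: "complex_rep G (card (carrier G)) (\<lambda>g. mono_mat (card (carrier G)) f (s g) (c g))"
    by (rule mono_rep[OF bij]) (auto simp: m_assoc s_def c_def)
  have "inj_on (\<lambda>g. mono_mat (card (carrier G)) f (s g) (c g)) (carrier G)"
  proof (rule inj_onI)
    fix g h assume g: "g \<in> carrier G" and h: "h \<in> carrier G"
      and eq: "mono_mat (card (carrier G)) f (s g) (c g) = mono_mat (card (carrier G)) f (s h) (c h)"
    from mono_mat_eqD[OF bij one_closed _ _ eq] g h show "g = h" by (simp add: s_def c_def)
  qed
  with rep show ?thesis unfolding faithful_complex_rep_def by blast
qed


lemma root_pow_eq:
  fixes z :: complex
  assumes z0: "z \<noteq> 0" and zr: "\<And>j. z ^ j = 1 \<longleftrightarrow> N dvd j"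
  shows "z ^ k = z ^ k' \<longleftrightarrow> int N dvd (int k' - int k)"
proof -
  have *: "z ^ k = z ^ k' \<longleftrightarrow> int N dvd (int k' - int k)" if kk: "k \<le> k'" for k k'
  proof -
    have "z ^ k' = z ^ k * z ^ (k' - k)" using kk by (metis le_add_diff_inverse power_add)
    then have "z ^ k = z ^ k' \<longleftrightarrow> z ^ (k' - k) = 1" using z0 by auto
    also have "\<dots> \<longleftrightarrow> N dvd (k' - k)" by (rule zr)
    also have "\<dots> \<longleftrightarrow> int N dvd (int k' - int k)" using kk by (simp add: of_nat_diff flip: int_dvd_int_iff)
    finally show ?thesis .
  qed
  show ?thesis
  proof (cases "k \<le> k'")
    case True then show ?thesis using * by blast
  next
    case False
    then have "z ^ k' = z ^ k \<longleftrightarrow> int N dvd (int k - int k')" using * by simp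
    then show ?thesis by (metis dvd_diff_commute)
  qed
qed

locale sdp =
  fixes C :: "('c, 'x) monoid_scheme" and H :: "('h, 'y) monoid_scheme" and \<phi> :: "'h \<Rightarrow> 'c \<Rightarrow> 'c"
  assumes grpC: "group C" and grpH: "group H" and act: "group_action H (carrier C) \<phi>"
    and homs: "\<forall>h \<in> carrier H. \<phi> h \<in> hom C C"
begin

lemma phi_closed: "h \<in> carrier H \<Longrightarrow> c \<in> carrier C \<Longrightarrow> \<phi> h c \<in> carrier C"
  by (rule group_action.element_image[OF act _ _ refl])

lemma phi_id: assumes c: "c \<in> carrier C" shows "\<phi> \<one>\<^bsub>H\<^esub> c = c"
proof -
  have "\<phi> \<one>\<^bsub>H\<^esub> c = (\<lambda>x\<in>carrier C. x) c" using group_action.id_eq_one[OF act] by simp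
  then show ?thesis using c by simp
qed

lemma phi_comp: "h1 \<in> carrier H \<Longrightarrow> h2 \<in> carrier H \<Longrightarrow> c \<in> carrier C \<Longrightarrow>
   \<phi> (h1 \<otimes>\<^bsub>H\<^esub> h2) c = \<phi> h1 (\<phi> h2 c)"
  by (rule group_action.composition_rule[OF act])

lemma phi_hom: "h \<in> carrier H \<Longrightarrow> group_hom C C (\<phi> h)"
  by (simp add: group_hom_def group_hom_axioms_def grpC homs)

lemma phi_mult: "h \<in> carrier H \<Longrightarrow> c1 \<in> carrier C \<Longrightarrow> c2 \<in> carrier C \<Longrightarrow>
   \<phi> h (c1 \<otimes>\<^bsub>C\<^esub> c2) = \<phi> h c1 \<otimes>\<^bsub>C\<^esub> \<phi> h c2"
  by (rule group_hom.hom_mult[OF phi_hom])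

lemma phi_one: "h \<in> carrier H \<Longrightarrow> \<phi> h \<one>\<^bsub>C\<^esub> = \<one>\<^bsub>C\<^esub>"
  by (rule group_hom.hom_one[OF phi_hom])

lemma phi_pow: "h \<in> carrier H \<Longrightarrow> c \<in> carrier C \<Longrightarrow> \<phi> h (c [^]\<^bsub>C\<^esub> (k::nat)) = \<phi> h c [^]\<^bsub>C\<^esub> k"
  by (rule group_hom.hom_nat_pow[OF phi_hom])

lemma phi_inv_cancel: assumes h: "h \<in> carrier H" and c: "c \<in> carrier C"
  shows "\<phi> (inv\<^bsub>H\<^esub> h) (\<phi> h c) = c"
proof -
  have hi: "inv\<^bsub>H\<^esub> h \<in> carrier H" using group.inv_closed[OF grpH h] .
  have "\<phi> (inv\<^bsub>H\<^esub> h) (\<phi> h c) = \<phi> (inv\<^bsub>H\<^esub> h \<otimes>\<^bsub>H\<^esub> h) c" using phi_comp[OF hi h c] by simp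
  also have "inv\<^bsub>H\<^esub> h \<otimes>\<^bsub>H\<^esub> h = \<one>\<^bsub>H\<^esub>" using group.l_inv[OF grpH h] .
  finally show ?thesis using phi_id[OF c] by simp
qed

lemma phi_inv_cancel2: assumes h: "h \<in> carrier H" and c: "c \<in> carrier C"
  shows "\<phi> h (\<phi> (inv\<^bsub>H\<^esub> h) c) = c"
proof -
  have hi: "inv\<^bsub>H\<^esub> h \<in> carrier H" using group.inv_closed[OF grpH h] .
  have "\<phi> h (\<phi> (inv\<^bsub>H\<^esub> h) c) = \<phi> (h \<otimes>\<^bsub>H\<^esub> inv\<^bsub>H\<^esub> h) c" using phi_comp[OF h hi c] by simp
  also have "h \<otimes>\<^bsub>H\<^esub> inv\<^bsub>H\<^esub> h = \<one>\<^bsub>H\<^esub>" using group.r_inv[OF grpH h] .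
  finally show ?thesis using phi_id[OF c] by simp
qed

lemma phi_inj: assumes h: "h \<in> carrier H" and c: "c \<in> carrier C" and c': "c' \<in> carrier C"
  and eq: "\<phi> h c = \<phi> h c'" shows "c = c'"
proof -
  have "c = \<phi> (inv\<^bsub>H\<^esub> h) (\<phi> h c)" using phi_inv_cancel[OF h c] by simp
  also have "\<dots> = \<phi> (inv\<^bsub>H\<^esub> h) (\<phi> h c')" using eq by simp
  also have "\<dots> = c'" using phi_inv_cancel[OF h c'] .
  finally show ?thesis .
qed

lemma SG_carrier: "carrier (semidirect_prod C H \<phi>) = carrier C \<times> carrier H"
  by (simp add: semidirect_prod_def)

lemma SG_mult: "(c1, h1) \<otimes>\<^bsub>semidirect_prod C H \<phi>\<^esub> (c2, h2) = (c1 \<otimes>\<^bsub>C\<^esub> \<phi> h1 c2, h1 \<otimes>\<^bsub>H\<^esub> h2)"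
  by (simp add: semidirect_prod_def)

lemma SG_one: "\<one>\<^bsub>semidirect_prod C H \<phi>\<^esub> = (\<one>\<^bsub>C\<^esub>, \<one>\<^bsub>H\<^esub>)"
  by (simp add: semidirect_prod_def)

lemma SG_monoid: "monoid (semidirect_prod C H \<phi>)"
proof (rule monoidI)
  fix x y z
  assume x: "x \<in> carrier (semidirect_prod C H \<phi>)" and y: "y \<in> carrier (semidirect_prod C H \<phi>)"
    and z: "z \<in> carrier (semidirect_prod C H \<phi>)"
  obtain c1 h1 where x': "x = (c1,h1)" "c1 \<in> carrier C" "h1 \<in> carrier H" using x SG_carrier by auto
  obtain c2 h2 where y': "y = (c2,h2)" "c2 \<in> carrier C" "h2 \<in> carrier H" using y SG_carrier by auto
  obtain c3 h3 where z': "z = (c3,h3)" "c3 \<in> carrier C" "h3 \<in> carrier H" using z SG_carrier by auto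
  have m: "\<phi> h1 (c2 \<otimes>\<^bsub>C\<^esub> \<phi> h2 c3) = \<phi> h1 c2 \<otimes>\<^bsub>C\<^esub> \<phi> (h1 \<otimes>\<^bsub>H\<^esub> h2) c3"
    using phi_mult[OF x'(3) y'(2) phi_closed[OF y'(3) z'(2)]] phi_comp[OF x'(3) y'(3) z'(2)] by simp
  have aC: "c1 \<otimes>\<^bsub>C\<^esub> \<phi> h1 c2 \<otimes>\<^bsub>C\<^esub> \<phi> (h1 \<otimes>\<^bsub>H\<^esub> h2) c3 = c1 \<otimes>\<^bsub>C\<^esub> (\<phi> h1 c2 \<otimes>\<^bsub>C\<^esub> \<phi> (h1 \<otimes>\<^bsub>H\<^esub> h2) c3)"
    by (rule monoid.m_assoc[OF group.is_monoid[OF grpC] x'(2) phi_closed[OF x'(3) y'(2)]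
          phi_closed[OF monoid.m_closed[OF group.is_monoid[OF grpH] x'(3) y'(3)] z'(2)]])
  have aH: "h1 \<otimes>\<^bsub>H\<^esub> h2 \<otimes>\<^bsub>H\<^esub> h3 = h1 \<otimes>\<^bsub>H\<^esub> (h2 \<otimes>\<^bsub>H\<^esub> h3)"
    by (rule monoid.m_assoc[OF group.is_monoid[OF grpH] x'(3) y'(3) z'(3)])
  show "x \<otimes>\<^bsub>semidirect_prod C H \<phi>\<^esub> y \<otimes>\<^bsub>semidirect_prod C H \<phi>\<^esub> z =
        x \<otimes>\<^bsub>semidirect_prod C H \<phi>\<^esub> (y \<otimes>\<^bsub>semidirect_prod C H \<phi>\<^esub> z)"
    unfolding x'(1) y'(1) z'(1) SG_mult m aC aH ..
next
  fix x y
  assume x: "x \<in> carrier (semidirect_prod C H \<phi>)" and y: "y \<in> carrier (semidirect_prod C H \<phi>)"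
  obtain c1 h1 where x': "x = (c1,h1)" "c1 \<in> carrier C" "h1 \<in> carrier H" using x SG_carrier by auto
  obtain c2 h2 where y': "y = (c2,h2)" "c2 \<in> carrier C" "h2 \<in> carrier H" using y SG_carrier by auto
  show "x \<otimes>\<^bsub>semidirect_prod C H \<phi>\<^esub> y \<in> carrier (semidirect_prod C H \<phi>)"
    using x' y' by (simp add: SG_mult SG_carrier phi_closed monoid.m_closed[OF group.is_monoid[OF grpC]] monoid.m_closed[OF group.is_monoid[OF grpH]])
next
  fix x assume x: "x \<in> carrier (semidirect_prod C H \<phi>)"
  obtain c1 h1 where x': "x = (c1,h1)" "c1 \<in> carrier C" "h1 \<in> carrier H" using x SG_carrier by auto
  show "\<one>\<^bsub>semidirect_prod C H \<phi>\<^esub> \<otimes>\<^bsub>semidirect_prod C H \<phi>\<^esub> x = x"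
    using x' by (simp add: SG_mult SG_one phi_id monoid.l_one[OF group.is_monoid[OF grpC]] monoid.l_one[OF group.is_monoid[OF grpH]])
  show "x \<otimes>\<^bsub>semidirect_prod C H \<phi>\<^esub> \<one>\<^bsub>semidirect_prod C H \<phi>\<^esub> = x"
    using x' by (simp add: SG_mult SG_one phi_one monoid.r_one[OF group.is_monoid[OF grpC]] monoid.r_one[OF group.is_monoid[OF grpH]])
qed (simp add: SG_carrier SG_one monoid.one_closed[OF group.is_monoid[OF grpC]] monoid.one_closed[OF group.is_monoid[OF grpH]])

end


locale cyc = sdp +
  fixes a :: 'c and p n :: nat
  assumes p: "Factorial_Ring.prime p" and n: "n \<ge> 1"
    and a: "a \<in> carrier C" and gen: "subgroup_generated C {a} = C"
    and finC: "finite (carrier C)" and ordC: "order C = p ^ n" and finH: "finite (carrier H)"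
begin

lemma genC: "generate C {a} = carrier C"
proof -
  have "carrier (subgroup_generated C {a}) = carrier C" using gen by simp
  then show ?thesis using a by (simp add: carrier_subgroup_generated Int_absorb1)
qed

lemma pow_all: assumes c: "c \<in> carrier C" shows "\<exists>k::nat. c = a [^]\<^bsub>C\<^esub> k"
proof -
  have "c \<in> generate C {a}" using genC c by simp
  then have "c \<in> {a [^]\<^bsub>C\<^esub> k | k. k \<in> (UNIV :: nat set)}"
    unfolding group.generate_pow_on_finite_carrier[OF grpC finC a] .
  then show ?thesis by blast
qed

lemma ord_a: "group.ord C a = p ^ n"
proof -
  have "group.ord C a = card (generate C {a})" by (rule group.generate_pow_card[OF grpC a])
  also have "\<dots> = order C" unfolding genC Coset.order_def ..
  finally show ?thesis using ordC by simp
qed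

lemma a_pow_one: "a [^]\<^bsub>C\<^esub> (k::nat) = \<one>\<^bsub>C\<^esub> \<longleftrightarrow> p ^ n dvd k"
  using group.pow_eq_id[OF grpC a] ord_a by simp

lemma a_pow_eq: "a [^]\<^bsub>C\<^esub> (k::nat) = a [^]\<^bsub>C\<^esub> (k'::nat) \<longleftrightarrow> int (p ^ n) dvd (int k' - int k)"
proof -
  have "a [^]\<^bsub>C\<^esub> (int k) = a [^]\<^bsub>C\<^esub> (int k') \<longleftrightarrow> int (group.ord C a) dvd (int k' - int k)"
    by (rule group.int_pow_eq[OF grpC a])
  then show ?thesis unfolding int_pow_int ord_a .
qed

definition orb where "orb = {\<phi> h a | h. h \<in> carrier H}"

lemma a_orb: "a \<in> orb"
proof -
  have "\<one>\<^bsub>H\<^esub> \<in> carrier H" using monoid.one_closed[OF group.is_monoid[OF grpH]] .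
  moreover have "a = \<phi> \<one>\<^bsub>H\<^esub> a" using phi_id[OF a] by simp
  ultimately show ?thesis unfolding orb_def by blast
qed

lemma orb_carrier: "b \<in> orb \<Longrightarrow> b \<in> carrier C" unfolding orb_def using phi_closed a by auto

lemma orb_closed: assumes h: "h \<in> carrier H" and b: "b \<in> orb" shows "\<phi> h b \<in> orb"
proof -
  obtain h' where h': "h' \<in> carrier H" "b = \<phi> h' a" using b unfolding orb_def by auto
  have "\<phi> h b = \<phi> (h \<otimes>\<^bsub>H\<^esub> h') a" using phi_comp[OF h h'(1) a] h' by simp
  moreover have "h \<otimes>\<^bsub>H\<^esub> h' \<in> carrier H" using monoid.m_closed[OF group.is_monoid[OF grpH] h h'(1)] .
  ultimately show ?thesis unfolding orb_def by blast
qed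

lemma finite_orb: "finite orb"
proof -
  have "orb = (\<lambda>h. \<phi> h a) ` carrier H" unfolding orb_def by blast
  then show ?thesis using finH by simp
qed

lemma orb_pow_all: assumes b: "b \<in> orb" and c: "c \<in> carrier C" shows "\<exists>k::nat. c = b [^]\<^bsub>C\<^esub> k"
proof -
  obtain h where h: "h \<in> carrier H" "b = \<phi> h a" using b unfolding orb_def by auto
  have hi: "inv\<^bsub>H\<^esub> h \<in> carrier H" using h group.inv_closed[OF grpH] by auto
  obtain k :: nat where k: "\<phi> (inv\<^bsub>H\<^esub> h) c = a [^]\<^bsub>C\<^esub> k" using pow_all[OF phi_closed[OF hi c]] by blast
  have "c = \<phi> h (a [^]\<^bsub>C\<^esub> k)" using phi_inv_cancel2[OF h(1) c] k by simp
  also have "\<dots> = b [^]\<^bsub>C\<^esub> k" using phi_pow[OF h(1) a] h by simp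
  finally show ?thesis by blast
qed

lemma orb_pow_eq: assumes b: "b \<in> orb"
  shows "b [^]\<^bsub>C\<^esub> (k::nat) = b [^]\<^bsub>C\<^esub> (k'::nat) \<longleftrightarrow> a [^]\<^bsub>C\<^esub> k = a [^]\<^bsub>C\<^esub> k'"
proof -
  obtain h where h: "h \<in> carrier H" "b = \<phi> h a" using b unfolding orb_def by auto
  have e1: "b [^]\<^bsub>C\<^esub> k = \<phi> h (a [^]\<^bsub>C\<^esub> k)" and e2: "b [^]\<^bsub>C\<^esub> k' = \<phi> h (a [^]\<^bsub>C\<^esub> k')"
    using phi_pow[OF h(1) a] h by auto
  have c1: "a [^]\<^bsub>C\<^esub> k \<in> carrier C" and c2: "a [^]\<^bsub>C\<^esub> k' \<in> carrier C"
    using a monoid.nat_pow_closed[OF group.is_monoid[OF grpC]] by auto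
  show ?thesis
  proof
    assume "b [^]\<^bsub>C\<^esub> k = b [^]\<^bsub>C\<^esub> k'"
    then have "\<phi> h (a [^]\<^bsub>C\<^esub> k) = \<phi> h (a [^]\<^bsub>C\<^esub> k')" unfolding e1 e2 .
    then show "a [^]\<^bsub>C\<^esub> k = a [^]\<^bsub>C\<^esub> k'" by (rule phi_inj[OF h(1) c1 c2])
  next
    assume "a [^]\<^bsub>C\<^esub> k = a [^]\<^bsub>C\<^esub> k'"
    then show "b [^]\<^bsub>C\<^esub> k = b [^]\<^bsub>C\<^esub> k'" unfolding e1 e2 by simp
  qed
qed

definition chi :: "complex \<Rightarrow> 'c \<Rightarrow> 'c \<Rightarrow> complex" where
  "chi z b c = z ^ (SOME k::nat. c = b [^]\<^bsub>C\<^esub> k)"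

context
  fixes z :: complex
  assumes z0: "z \<noteq> 0" and zr: "\<And>j. z ^ j = 1 \<longleftrightarrow> p ^ n dvd j"
begin

lemma z_pow_eq: "z ^ k = z ^ k' \<longleftrightarrow> a [^]\<^bsub>C\<^esub> (k::nat) = a [^]\<^bsub>C\<^esub> (k'::nat)"
  using root_pow_eq[OF z0 zr] a_pow_eq by simp

lemma chi_pow: assumes b: "b \<in> orb" shows "chi z b (b [^]\<^bsub>C\<^esub> (k::nat)) = z ^ k"
proof -
  define k' where "k' = (SOME k'::nat. b [^]\<^bsub>C\<^esub> k = b [^]\<^bsub>C\<^esub> k')"
  have "b [^]\<^bsub>C\<^esub> k = b [^]\<^bsub>C\<^esub> k'" unfolding k'_def by (rule someI[of _ k]) simp
  then have "z ^ k' = z ^ k" using orb_pow_eq[OF b] z_pow_eq by simp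
  then show ?thesis unfolding chi_def k'_def by simp
qed

lemma chi_mult: assumes b: "b \<in> orb" and c1: "c1 \<in> carrier C" and c2: "c2 \<in> carrier C"
  shows "chi z b (c1 \<otimes>\<^bsub>C\<^esub> c2) = chi z b c1 * chi z b c2"
proof -
  obtain k1 :: nat where k1: "c1 = b [^]\<^bsub>C\<^esub> k1" using orb_pow_all[OF b c1] by blast
  obtain k2 :: nat where k2: "c2 = b [^]\<^bsub>C\<^esub> k2" using orb_pow_all[OF b c2] by blast
  have "c1 \<otimes>\<^bsub>C\<^esub> c2 = b [^]\<^bsub>C\<^esub> (k1 + k2)"
    using k1 k2 monoid.nat_pow_mult[OF group.is_monoid[OF grpC] orb_carrier[OF b]] by simp
  then show ?thesis using chi_pow[OF b] k1 k2 by (simp add: power_add)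
qed

lemma chi_phi: assumes h: "h \<in> carrier H" and b: "b \<in> orb" and c: "c \<in> carrier C"
  shows "chi z (\<phi> h b) (\<phi> h c) = chi z b c"
proof -
  obtain k :: nat where k: "c = b [^]\<^bsub>C\<^esub> k" using orb_pow_all[OF b c] by blast
  have "\<phi> h c = (\<phi> h b) [^]\<^bsub>C\<^esub> k" using k phi_pow[OF h orb_carrier[OF b]] by simp
  then show ?thesis using chi_pow[OF orb_closed[OF h b]] chi_pow[OF b] k by simp
qed

lemma chi_one: "b \<in> orb \<Longrightarrow> chi z b \<one>\<^bsub>C\<^esub> = 1"
  using chi_pow[of b 0] by simp

lemma chi_nz: "chi z b c \<noteq> 0"
  unfolding chi_def using z0 by simp

lemma chi_inj: assumes b: "b \<in> orb" and c: "c \<in> carrier C" and c': "c' \<in> carrier C"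
  and eq: "chi z b c = chi z b c'" shows "c = c'"
proof -
  obtain k :: nat where k: "c = b [^]\<^bsub>C\<^esub> k" using orb_pow_all[OF b c] by blast
  obtain k' :: nat where k': "c' = b [^]\<^bsub>C\<^esub> k'" using orb_pow_all[OF b c'] by blast
  have "z ^ k = z ^ k'" using eq chi_pow[OF b] k k' by simp
  then show ?thesis using z_pow_eq orb_pow_eq[OF b] k k' by simp
qed

lemma phi_eq_on_a: assumes h: "h \<in> carrier H" and h': "h' \<in> carrier H" and eq: "\<phi> h a = \<phi> h' a"
  shows "\<phi> h = \<phi> h'"
proof -
  have B: "\<phi> h \<in> extensional (carrier C)" "\<phi> h' \<in> extensional (carrier C)"
    using group_action.bij_prop0[OF act] h h' unfolding Bij_def by auto
  show ?thesis
  proof (rule extensionalityI[OF B])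
    fix c assume c: "c \<in> carrier C"
    obtain k :: nat where k: "c = a [^]\<^bsub>C\<^esub> k" using pow_all[OF c] by blast
    show "\<phi> h c = \<phi> h' c" using k phi_pow[OF h a] phi_pow[OF h' a] eq by simp
  qed
qed

lemma monomial_rep:
  assumes inj: "inj_on \<phi> (carrier H)"
  shows "\<exists>\<rho>. faithful_complex_rep (semidirect_prod C H \<phi>) (card orb) \<rho>"
proof -
  obtain f where bij: "bij_betw f {0..<card orb} orb"
    using ex_bij_betw_nat_finite[OF finite_orb] by blast
  define s where "s = (\<lambda>(g::'c \<times> _) y. \<phi> (snd g) y)"
  define cc where "cc = (\<lambda>g y. chi z (\<phi> (snd g) y) (fst g))"
  have rep: "complex_rep (semidirect_prod C H \<phi>) (card orb) (\<lambda>g. mono_mat (card orb) f (s g) (cc g))"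
  proof (rule mono_rep[OF bij])
    fix g y assume "g \<in> carrier (semidirect_prod C H \<phi>)" "y \<in> orb"
    then show "s g y \<in> orb" unfolding s_def using orb_closed SG_carrier by auto
  next
    fix g g' y assume g: "g \<in> carrier (semidirect_prod C H \<phi>)" and g': "g' \<in> carrier (semidirect_prod C H \<phi>)"
      and y: "y \<in> orb"
    obtain c1 h1 where x': "g = (c1,h1)" "c1 \<in> carrier C" "h1 \<in> carrier H" using g SG_carrier by auto
    obtain c2 h2 where y': "g' = (c2,h2)" "c2 \<in> carrier C" "h2 \<in> carrier H" using g' SG_carrier by auto
    have yC: "y \<in> carrier C" using orb_carrier[OF y] .
    have sm: "s (g \<otimes>\<^bsub>semidirect_prod C H \<phi>\<^esub> g') y = s g (s g' y)"
      using x' y' yC by (simp add: s_def SG_mult phi_comp)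
    have y2: "\<phi> h2 y \<in> orb" using orb_closed[OF y'(3) y] .
    have "cc (g \<otimes>\<^bsub>semidirect_prod C H \<phi>\<^esub> g') y = chi z (\<phi> h1 (\<phi> h2 y)) (c1 \<otimes>\<^bsub>C\<^esub> \<phi> h1 c2)"
      using x' y' yC by (simp add: cc_def SG_mult phi_comp)
    also have "\<dots> = chi z (\<phi> h1 (\<phi> h2 y)) c1 * chi z (\<phi> h1 (\<phi> h2 y)) (\<phi> h1 c2)"
      by (rule chi_mult[OF orb_closed[OF x'(3) y2] x'(2) phi_closed[OF x'(3) y'(2)]])
    also have "chi z (\<phi> h1 (\<phi> h2 y)) (\<phi> h1 c2) = chi z (\<phi> h2 y) c2"
      by (rule chi_phi[OF x'(3) y2 y'(2)])
    finally have "cc (g \<otimes>\<^bsub>semidirect_prod C H \<phi>\<^esub> g') y = cc g (s g' y) * cc g' y"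
      using x' y' by (simp add: cc_def s_def)
    with sm show "s (g \<otimes>\<^bsub>semidirect_prod C H \<phi>\<^esub> g') y = s g (s g' y) \<and>
       cc (g \<otimes>\<^bsub>semidirect_prod C H \<phi>\<^esub> g') y = cc g (s g' y) * cc g' y" by blast
  next
    fix y assume y: "y \<in> orb"
    show "s \<one>\<^bsub>semidirect_prod C H \<phi>\<^esub> y = y \<and> cc \<one>\<^bsub>semidirect_prod C H \<phi>\<^esub> y = 1"
      using y orb_carrier[OF y] by (simp add: s_def cc_def SG_one phi_id chi_one)
  qed
  have "inj_on (\<lambda>g. mono_mat (card orb) f (s g) (cc g)) (carrier (semidirect_prod C H \<phi>))"
  proof (rule inj_onI)
    fix g g' assume g: "g \<in> carrier (semidirect_prod C H \<phi>)" and g': "g' \<in> carrier (semidirect_prod C H \<phi>)"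
      and eq: "mono_mat (card orb) f (s g) (cc g) = mono_mat (card orb) f (s g') (cc g')"
    obtain c1 h1 where x': "g = (c1,h1)" "c1 \<in> carrier C" "h1 \<in> carrier H" using g SG_carrier by auto
    obtain c2 h2 where y': "g' = (c2,h2)" "c2 \<in> carrier C" "h2 \<in> carrier H" using g' SG_carrier by auto
    have sa: "s g a \<in> orb" using x' orb_closed[OF _ a_orb] by (simp add: s_def)
    have cz: "cc g a \<noteq> 0" unfolding cc_def by (rule chi_nz)
    from mono_mat_eqD[OF bij a_orb sa cz eq]
    have e1: "\<phi> h1 a = \<phi> h2 a" and e2: "chi z (\<phi> h1 a) c1 = chi z (\<phi> h2 a) c2"
      using x' y' by (auto simp: s_def cc_def)
    have "\<phi> h1 = \<phi> h2" by (rule phi_eq_on_a[OF x'(3) y'(3) e1])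
    then have "h1 = h2" using inj x' y' by (meson inj_onD)
    moreover have "c1 = c2" using chi_inj[OF orb_closed[OF x'(3) a_orb] x'(2) y'(2)] e1 e2 by simp
    ultimately show "g = g'" using x' y' by simp
  qed
  with rep show ?thesis unfolding faithful_complex_rep_def by blast
qed

end

end


context cyc
begin

lemma lower_bound:
  assumes rep: "faithful_complex_rep (semidirect_prod C H \<phi>) d \<rho>"
  shows "card orb \<le> d"
proof -
  have crep: "complex_rep (semidirect_prod C H \<phi>) d \<rho>" and inj: "inj_on \<rho> (carrier C \<times> carrier H)"
    using rep unfolding faithful_complex_rep_def SG_carrier by auto
  have rcar: "\<And>c h. c \<in> carrier C \<Longrightarrow> h \<in> carrier H \<Longrightarrow> \<rho> (c,h) \<in> carrier_mat d d"
    using crep unfolding complex_rep_def SG_carrier by auto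
  have rone: "\<rho> (\<one>\<^bsub>C\<^esub>, \<one>\<^bsub>H\<^esub>) = 1\<^sub>m d"
    using crep unfolding complex_rep_def SG_one by auto
  have rmult: "\<And>c1 h1 c2 h2. c1 \<in> carrier C \<Longrightarrow> h1 \<in> carrier H \<Longrightarrow> c2 \<in> carrier C \<Longrightarrow> h2 \<in> carrier H \<Longrightarrow>
     \<rho> (c1, h1) * \<rho> (c2, h2) = \<rho> (c1 \<otimes>\<^bsub>C\<^esub> \<phi> h1 c2, h1 \<otimes>\<^bsub>H\<^esub> h2)"
  proof -
    fix c1 h1 c2 h2 assume "c1 \<in> carrier C" "h1 \<in> carrier H" "c2 \<in> carrier C" "h2 \<in> carrier H"
    then have "\<rho> ((c1, h1) \<otimes>\<^bsub>semidirect_prod C H \<phi>\<^esub> (c2, h2)) = \<rho> (c1, h1) * \<rho> (c2, h2)"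
      using crep unfolding complex_rep_def SG_carrier by auto
    then show "\<rho> (c1, h1) * \<rho> (c2, h2) = \<rho> (c1 \<otimes>\<^bsub>C\<^esub> \<phi> h1 c2, h1 \<otimes>\<^bsub>H\<^esub> h2)"
      unfolding SG_mult by simp
  qed
  have oneH: "\<one>\<^bsub>H\<^esub> \<in> carrier H" using monoid.one_closed[OF group.is_monoid[OF grpH]] .
  have oneC: "\<one>\<^bsub>C\<^esub> \<in> carrier C" using monoid.one_closed[OF group.is_monoid[OF grpC]] .
  have powc: "\<And>c k. c \<in> carrier C \<Longrightarrow> \<rho> (c [^]\<^bsub>C\<^esub> (k::nat), \<one>\<^bsub>H\<^esub>) = \<rho> (c, \<one>\<^bsub>H\<^esub>) ^\<^sub>m k"
  proof -
    fix c and k :: nat assume c: "c \<in> carrier C"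
    show "\<rho> (c [^]\<^bsub>C\<^esub> k, \<one>\<^bsub>H\<^esub>) = \<rho> (c, \<one>\<^bsub>H\<^esub>) ^\<^sub>m k"
    proof (induct k)
      case 0
      then show ?case using rone carrier_matD(1)[OF rcar[OF c oneH]] by simp
    next
      case (Suc k)
      have ck: "c [^]\<^bsub>C\<^esub> k \<in> carrier C" using monoid.nat_pow_closed[OF group.is_monoid[OF grpC] c] .
      have "c [^]\<^bsub>C\<^esub> Suc k = c [^]\<^bsub>C\<^esub> k \<otimes>\<^bsub>C\<^esub> \<phi> \<one>\<^bsub>H\<^esub> c"
        using phi_id[OF c] by simp
      moreover have "\<one>\<^bsub>H\<^esub> = \<one>\<^bsub>H\<^esub> \<otimes>\<^bsub>H\<^esub> \<one>\<^bsub>H\<^esub>"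
        using monoid.l_one[OF group.is_monoid[OF grpH] oneH] by simp
      ultimately have "\<rho> (c [^]\<^bsub>C\<^esub> Suc k, \<one>\<^bsub>H\<^esub>) = \<rho> (c [^]\<^bsub>C\<^esub> k, \<one>\<^bsub>H\<^esub>) * \<rho> (c, \<one>\<^bsub>H\<^esub>)"
        using rmult[OF ck oneH c oneH] by metis
      then show ?case using Suc by simp
    qed
  qed
  define A where "A = \<rho> (a, \<one>\<^bsub>H\<^esub>)"
  have Ac: "A \<in> carrier_mat d d" unfolding A_def using rcar[OF a oneH] .
  define m where "m = p ^ (n - 1)"
  have p1: "p > 1" using prime_gt_1_nat[OF p] by simp
  have pn: "p ^ n = m * p" unfolding m_def using n by (metis Suc_diff_le diff_Suc_1 power_Suc2)
  have am: "a [^]\<^bsub>C\<^esub> m \<in> carrier C" using monoid.nat_pow_closed[OF group.is_monoid[OF grpC] a] .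
  have B1: "A ^\<^sub>m m \<noteq> 1\<^sub>m d"
  proof
    assume "A ^\<^sub>m m = 1\<^sub>m d"
    then have "\<rho> (a [^]\<^bsub>C\<^esub> m, \<one>\<^bsub>H\<^esub>) = \<rho> (\<one>\<^bsub>C\<^esub>, \<one>\<^bsub>H\<^esub>)" using powc[OF a] rone unfolding A_def by simp
    then have "a [^]\<^bsub>C\<^esub> m = \<one>\<^bsub>C\<^esub>" using inj_onD[OF inj] am oneC oneH by blast
    then have "p ^ n dvd m" using a_pow_one by simp
    moreover have "0 < m" "m < p ^ n" unfolding pn using p1 by (auto simp: m_def)
    ultimately show False by (simp add: nat_dvd_not_less)
  qed
  have Bq: "(A ^\<^sub>m m) ^\<^sub>m p = 1\<^sub>m d"
  proof -
    have "(A ^\<^sub>m m) ^\<^sub>m p = \<rho> ((a [^]\<^bsub>C\<^esub> m) [^]\<^bsub>C\<^esub> p, \<one>\<^bsub>H\<^esub>)"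
      using powc[OF a] powc[OF am] unfolding A_def by simp
    also have "(a [^]\<^bsub>C\<^esub> m) [^]\<^bsub>C\<^esub> p = a [^]\<^bsub>C\<^esub> (p ^ n)"
      unfolding pn using monoid.nat_pow_pow[OF group.is_monoid[OF grpC] a] by simp
    also have "\<dots> = \<one>\<^bsub>C\<^esub>" using a_pow_one by simp
    finally show ?thesis using rone by simp
  qed
  obtain lam where ev: "eigenvalue A lam" and s: "(\<Sum>l<p. (lam ^ m) ^ l) = 0"
    using prim_eig[OF Ac B1 Bq] by blast
  have lp: "lam ^ (p ^ n) = 1" and ldv: "\<And>j. lam ^ j = 1 \<Longrightarrow> p ^ n dvd j"
    using prim_root[OF p n s[unfolded m_def]] by auto
  have zr: "\<And>j. lam ^ j = 1 \<longleftrightarrow> p ^ n dvd j"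
  proof
    fix j assume "p ^ n dvd j"
    then obtain t where "j = p ^ n * t" by blast
    then show "lam ^ j = 1" using lp by (simp add: power_mult)
  qed (rule ldv)
  have l0: "lam \<noteq> 0" using lp p1 by (metis power_0_left zero_neq_one not_one_less_zero power_eq_0_iff)
  define kb where "kb = (\<lambda>b. SOME k::nat. b = a [^]\<^bsub>C\<^esub> k)"
  have kb: "\<And>b. b \<in> orb \<Longrightarrow> b = a [^]\<^bsub>C\<^esub> kb b"
  proof -
    fix b assume "b \<in> orb"
    then obtain k :: nat where "b = a [^]\<^bsub>C\<^esub> k" using pow_all[OF orb_carrier] by blast
    then show "b = a [^]\<^bsub>C\<^esub> kb b" unfolding kb_def by (rule someI)
  qed
  obtain v where v: "v \<in> carrier_vec d" "v \<noteq> 0\<^sub>v d" "A *\<^sub>v v = lam \<cdot>\<^sub>v v"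
    using ev Ac unfolding eigenvalue_def eigenvector_def by auto
  have evb: "eigenvalue A (lam ^ kb b)" if b: "b \<in> orb" for b
  proof -
    obtain h where h: "h \<in> carrier H" "b = \<phi> h a" using b unfolding orb_def by auto
    define k where "k = kb b"
    have bk: "b = a [^]\<^bsub>C\<^esub> k" unfolding k_def by (rule kb[OF b])
    have hi: "inv\<^bsub>H\<^esub> h \<in> carrier H" using group.inv_closed[OF grpH h(1)] .
    define Q where "Q = \<rho> (\<one>\<^bsub>C\<^esub>, inv\<^bsub>H\<^esub> h)"
    define R where "R = \<rho> (\<one>\<^bsub>C\<^esub>, h)"
    have Qc: "Q \<in> carrier_mat d d" unfolding Q_def using rcar[OF oneC hi] .
    have Rc: "R \<in> carrier_mat d d" unfolding R_def using rcar[OF oneC h(1)] .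
    have RQ: "R * Q = 1\<^sub>m d"
    proof -
      have "R * Q = \<rho> (\<one>\<^bsub>C\<^esub> \<otimes>\<^bsub>C\<^esub> \<phi> h \<one>\<^bsub>C\<^esub>, h \<otimes>\<^bsub>H\<^esub> inv\<^bsub>H\<^esub> h)"
        unfolding R_def Q_def by (rule rmult[OF oneC h(1) oneC hi])
      also have "\<one>\<^bsub>C\<^esub> \<otimes>\<^bsub>C\<^esub> \<phi> h \<one>\<^bsub>C\<^esub> = \<one>\<^bsub>C\<^esub>"
        using phi_one[OF h(1)] monoid.l_one[OF group.is_monoid[OF grpC] oneC] by simp
      also have "h \<otimes>\<^bsub>H\<^esub> inv\<^bsub>H\<^esub> h = \<one>\<^bsub>H\<^esub>" using group.r_inv[OF grpH h(1)] .
      finally show ?thesis using rone by simp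
    qed
    have AQ: "A * Q = Q * A ^\<^sub>m k"
    proof -
      have "A * Q = \<rho> (a \<otimes>\<^bsub>C\<^esub> \<phi> \<one>\<^bsub>H\<^esub> \<one>\<^bsub>C\<^esub>, \<one>\<^bsub>H\<^esub> \<otimes>\<^bsub>H\<^esub> inv\<^bsub>H\<^esub> h)"
        unfolding A_def Q_def by (rule rmult[OF a oneH oneC hi])
      also have "a \<otimes>\<^bsub>C\<^esub> \<phi> \<one>\<^bsub>H\<^esub> \<one>\<^bsub>C\<^esub> = a"
        using phi_id[OF oneC] monoid.r_one[OF group.is_monoid[OF grpC] a] by simp
      also have "\<one>\<^bsub>H\<^esub> \<otimes>\<^bsub>H\<^esub> inv\<^bsub>H\<^esub> h = inv\<^bsub>H\<^esub> h" using monoid.l_one[OF group.is_monoid[OF grpH] hi] .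
      finally have 1: "A * Q = \<rho> (a, inv\<^bsub>H\<^esub> h)" .
      have bC: "b \<in> carrier C" using orb_carrier[OF b] .
      have "Q * A ^\<^sub>m k = Q * \<rho> (b, \<one>\<^bsub>H\<^esub>)" using powc[OF a, of k] bk unfolding A_def by simp
      also have "\<dots> = \<rho> (\<one>\<^bsub>C\<^esub> \<otimes>\<^bsub>C\<^esub> \<phi> (inv\<^bsub>H\<^esub> h) b, inv\<^bsub>H\<^esub> h \<otimes>\<^bsub>H\<^esub> \<one>\<^bsub>H\<^esub>)"
        unfolding Q_def by (rule rmult[OF oneC hi bC oneH])
      also have "\<one>\<^bsub>C\<^esub> \<otimes>\<^bsub>C\<^esub> \<phi> (inv\<^bsub>H\<^esub> h) b = a"
        using phi_inv_cancel[OF h(1) a] h(2) monoid.l_one[OF group.is_monoid[OF grpC] a] by simp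
      also have "inv\<^bsub>H\<^esub> h \<otimes>\<^bsub>H\<^esub> \<one>\<^bsub>H\<^esub> = inv\<^bsub>H\<^esub> h" using monoid.r_one[OF group.is_monoid[OF grpH] hi] .
      finally show ?thesis using 1 by simp
    qed
    define w where "w = Q *\<^sub>v v"
    have wc: "w \<in> carrier_vec d" unfolding w_def using Qc v(1) by simp
    have Akv: "A ^\<^sub>m k *\<^sub>v v = lam ^ k \<cdot>\<^sub>v v"
      by (rule eigenvector_pow[OF Ac]) (use v Ac in \<open>auto simp: eigenvector_def\<close>)
    have "A *\<^sub>v w = (A * Q) *\<^sub>v v" unfolding w_def using assoc_mult_mat_vec[OF Ac Qc v(1)] by simp
    also have "\<dots> = Q *\<^sub>v (A ^\<^sub>m k *\<^sub>v v)" unfolding AQ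
      using assoc_mult_mat_vec[OF Qc pow_carrier_mat[OF Ac] v(1)] .
    also have "\<dots> = lam ^ k \<cdot>\<^sub>v w" unfolding Akv w_def by (rule mult_mat_vec[OF Qc v(1)])
    finally have Aw: "A *\<^sub>v w = lam ^ k \<cdot>\<^sub>v w" .
    have w0: "w \<noteq> 0\<^sub>v d"
    proof
      assume w0: "w = 0\<^sub>v d"
      have "v = (R * Q) *\<^sub>v v" using RQ v(1) by simp
      also have "\<dots> = R *\<^sub>v w" unfolding w_def using assoc_mult_mat_vec[OF Rc Qc v(1)] .
      also have "\<dots> = 0\<^sub>v d" unfolding w0 using Rc by (intro eq_vecI) auto
      finally show False using v(2) by simp
    qed
    have "eigenvector A w (lam ^ k)" unfolding eigenvector_def using wc w0 Aw Ac by auto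
    then show ?thesis unfolding eigenvalue_def k_def by blast
  qed
  define F where "F = (\<lambda>b. lam ^ kb b)"
  have injF: "inj_on F orb"
  proof (rule inj_onI)
    fix b b' assume b: "b \<in> orb" and b': "b' \<in> orb" and eq: "F b = F b'"
    then have "int (p ^ n) dvd (int (kb b') - int (kb b))"
      using root_pow_eq[OF l0 zr] unfolding F_def by simp
    then have "a [^]\<^bsub>C\<^esub> kb b = a [^]\<^bsub>C\<^esub> kb b'" using a_pow_eq by simp
    then show "b = b'" using kb[OF b] kb[OF b'] by simp
  qed
  have sub: "F ` orb \<subseteq> spectrum A" unfolding spectrum_def F_def using evb by auto
  have "card orb = card (F ` orb)" using card_image[OF injF] by simp
  also have "\<dots> \<le> card (spectrum A)" by (rule card_mono[OF card_finite_spectrum(1)[OF Ac] sub])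
  also have "\<dots> \<le> d" by (rule card_finite_spectrum(2)[OF Ac])
  finally show ?thesis .
qed

end


theorem proposition1p4:
  fixes C :: "('c, 'x) monoid_scheme" and H :: "('h, 'y) monoid_scheme"
    and \<phi> :: "'h \<Rightarrow> 'c \<Rightarrow> 'c" and a :: 'c and p n :: nat
  assumes "Factorial_Ring.prime p" and "n \<ge> 1"
    and "group C" and "a \<in> carrier C" and "subgroup_generated C {a} = C"
    and "finite (carrier C)" and "order C = p ^ n"
    and "group H" and "finite (carrier H)"
    and "group_action H (carrier C) \<phi>"
    and "\<forall>h \<in> carrier H. \<phi> h \<in> hom C C"
  shows "m_faithful (semidirect_prod C H \<phi>) \<ge> card {\<phi> h a | h. h \<in> carrier H} \<and>
         (inj_on \<phi> (carrier H) \<longrightarrow>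
          m_faithful (semidirect_prod C H \<phi>) = card {\<phi> h a | h. h \<in> carrier H})"
proof -
  interpret cyc C H \<phi> a p n
    by (intro cyc.intro sdp.intro cyc_axioms.intro) (use assms in auto)
  have orbeq: "{\<phi> h a | h. h \<in> carrier H} = orb" unfolding orb_def ..
  have ex: "\<exists>d \<rho>. faithful_complex_rep (semidirect_prod C H \<phi>) d \<rho>"
    by (rule regular_rep[OF SG_monoid]) (simp add: SG_carrier finC finH)
  define M where "M = m_faithful (semidirect_prod C H \<phi>)"
  have "\<exists>\<rho>. faithful_complex_rep (semidirect_prod C H \<phi>) M \<rho>"
    unfolding M_def m_faithful_def by (rule LeastI_ex[OF ex])
  then have lb: "card orb \<le> M" using lower_bound by blast
  have ub: "M \<le> card orb" if inj: "inj_on \<phi> (carrier H)"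
  proof -
    have "p ^ n > 0" using prime_gt_0_nat[OF p] by simp
    then obtain z :: complex where z0: "z \<noteq> 0" and zr: "\<forall>j. z ^ j = 1 \<longleftrightarrow> p ^ n dvd j"
      using cis_root by blast
    obtain \<rho> where "faithful_complex_rep (semidirect_prod C H \<phi>) (card orb) \<rho>"
      using monomial_rep[OF z0 _ inj] zr by blast
    then show ?thesis unfolding M_def m_faithful_def by (blast intro: Least_le)
  qed
  show ?thesis unfolding orbeq M_def[symmetric] using lb ub by auto
qed

end
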